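(* Let $\mathcal T$ be an orbital category and $\mathcal F$ a $\mathcal T$-family. The preimage of $\{\mathcal F\}$ under $c:\mathrm{wIndSys}_{\mathcal T}\to\mathrm{Fam}_{\mathcal T}$ is exactly the image of the restriction of $E^{\mathcal T}_{\mathcal F}$ to one-color $\mathcal F$-weak indexing systems.
   Context: For a small category $\mathcal T$, $\mathbb F_{\mathcal T}$ is the full subcategory of $\mathrm{Fun}(\mathcal T^{op},\mathrm{Set})$ on finite coproducts of representables; $\mathcal T$ is orbital if $\mathbb F_{\mathcal T}$ has pullbacks. $\mathbb F_V:=\mathbb F_{\mathcal T,/V}$, $*_V$ terminal; for $U\to V$, $\mathrm{Res}^V_U$ is pullback and $\mathrm{Ind}^V_U$ postcomposition. A full $\mathcal T$-subcategory $\mathcal C$ assigns isomorphism-closed classes $\mathcal C_V\subseteq\mathrm{Ob}\,\mathbb F_V$ stable under all restrictions. For $S\in\mathbb F_V$ with orbits $U\in\mathrm{Orb}(S)$ and $T_U\in\mathbb F_U$, $\coprod_U^ST_U:=\coprod_U\mathrm{Ind}_U^VT_U$. A $\mathcal T$-weak indexing system is a full $\mathcal T$-subcategory $\mathcal C$ with $\mathcal C_V\neq\emptyset\Rightarrow *_V\in\mathcal C_V$ and closed under $\coprod^S_U T_U$ for $S\in\mathcal C_V$, $T_U\in\mathcal C_U$; it has one color if all $\mathcal C_V$ are nonempty. $\mathrm{wIndSys}_{\mathcal T}$ is their poset under inclusion. A $\mathcal T$-family is a full subcategory $\mathcal F$ such that $V\to W$ with $W\in\mathcal F$ implies $V\in\mathcal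 F$; $\mathrm{Fam}_{\mathcal T}$ is their poset. A $\mathcal T$-family $\mathcal F$ is itself orbital (with $\mathbb F_{\mathcal F,/V}=\mathbb F_V$ for $V\in\mathcal F$), so $\mathcal F$-weak indexing systems are defined. $c(\mathcal C)=\{V\mid *_V\in\mathcal C_V\}$. For an $\mathcal F$-weak indexing system $\mathcal C$, $E^{\mathcal T}_{\mathcal F}\mathcal C$ is the $\mathcal T$-weak indexing system with $(E^{\mathcal T}_{\mathcal F}\mathcal C)_V=\mathcal C_V$ for $V\in\mathcal F$ and $=\emptyset$ otherwise. *)

theory Defs
  imports Main
begin

text \<open>A small category: objects, hom-sets, composition (Comp g f = g after f), identities.\<close>
record ('o, 'm) cat =
  Obj  :: "'o set"
  Hom  :: "'o \<Rightarrow> 'o \<Rightarrow> 'm set"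
  Comp :: "'m \<Rightarrow> 'm \<Rightarrow> 'm"
  Ident :: "'o \<Rightarrow> 'm"

definition is_category :: "('o, 'm) cat \<Rightarrow> bool" where
  "is_category T \<longleftrightarrow>
     (\<forall>a b. Hom T a b \<noteq> {} \<longrightarrow> a \<in> Obj T \<and> b \<in> Obj T) \<and>
     (\<forall>a\<in>Obj T. Ident T a \<in> Hom T a a) \<and>
     (\<forall>a\<in>Obj T. \<forall>b\<in>Obj T. \<forall>c\<in>Obj T. \<forall>f\<in>Hom T a b. \<forall>g\<in>Hom T b c.
         Comp T g f \<in> Hom T a c) \<and>
     (\<forall>a\<in>Obj T. \<forall>b\<in>Obj T. \<forall>f\<in>Hom T a b.
         Comp T (Ident T b) f = f \<and> Comp T f (Ident T a) = f) \<and>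
     (\<forall>a\<in>Obj T. \<forall>b\<in>Obj T. \<forall>c\<in>Obj T. \<forall>d\<in>Obj T.
       \<forall>f\<in>Hom T a b. \<forall>g\<in>Hom T b c. \<forall>h\<in>Hom T c d.
         Comp T h (Comp T g f) = Comp T (Comp T h g) f)"

text \<open>An object of F_T (a finite coproduct of representables) is a list of objects of T.
  By the Yoneda lemma, a morphism from the coproduct of the xs!i to the coproduct of the ys!j
  is, for each i, a choice of an index j and a morphism xs!i to ys!j in T.  We encode it as a
  function nat to (nat * 'm), only its values on i < length xs being relevant.\<close>

definition fobj :: "('o, 'm) cat \<Rightarrow> 'o list \<Rightarrow> bool" where
  "fobj T xs \<longleftrightarrow> set xs \<subseteq> Obj T"

definition fmor :: "('o, 'm) cat \<Rightarrow> 'o list \<Rightarrow> 'o list \<Rightarrow> (nat \<Rightarrow> nat \<times> 'm) \<Rightarrow> bool" where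
  "fmor T xs ys g \<longleftrightarrow>
     (\<forall>i<length xs. fst (g i) < length ys \<and> snd (g i) \<in> Hom T (xs ! i) (ys ! fst (g i)))"

definition fmor_eq :: "'o list \<Rightarrow> (nat \<Rightarrow> nat \<times> 'm) \<Rightarrow> (nat \<Rightarrow> nat \<times> 'm) \<Rightarrow> bool" where
  "fmor_eq xs g h \<longleftrightarrow> (\<forall>i<length xs. g i = h i)"

definition fcomp :: "('o, 'm) cat \<Rightarrow> (nat \<Rightarrow> nat \<times> 'm) \<Rightarrow> (nat \<Rightarrow> nat \<times> 'm) \<Rightarrow> (nat \<Rightarrow> nat \<times> 'm)" where
  "fcomp T h g = (\<lambda>i. (fst (h (fst (g i))), Comp T (snd (h (fst (g i)))) (snd (g i))))"

definition fid :: "('o, 'm) cat \<Rightarrow> 'o list \<Rightarrow> (nat \<Rightarrow> nat \<times> 'm)" where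
  "fid T xs = (\<lambda>i. (i, Ident T (xs ! i)))"

definition is_pullback ::
  "('o, 'm) cat \<Rightarrow> 'o list \<Rightarrow> 'o list \<Rightarrow> 'o list \<Rightarrow> (nat \<Rightarrow> nat \<times> 'm) \<Rightarrow> (nat \<Rightarrow> nat \<times> 'm)
     \<Rightarrow> 'o list \<Rightarrow> (nat \<Rightarrow> nat \<times> 'm) \<Rightarrow> (nat \<Rightarrow> nat \<times> 'm) \<Rightarrow> bool" where
  "is_pullback T xs ys zs a b P pa pb \<longleftrightarrow>
     fobj T P \<and> fmor T P xs pa \<and> fmor T P ys pb \<and>
     fmor_eq P (fcomp T a pa) (fcomp T b pb) \<and>
     (\<forall>W qa qb. fobj T W \<and> fmor T W xs qa \<and> fmor T W ys qb \<and>
                fmor_eq W (fcomp T a qa) (fcomp T b qb) \<longrightarrow>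
        (\<exists>u. fmor T W P u \<and> fmor_eq W (fcomp T pa u) qa \<and> fmor_eq W (fcomp T pb u) qb \<and>
             (\<forall>u'. fmor T W P u' \<and> fmor_eq W (fcomp T pa u') qa \<and> fmor_eq W (fcomp T pb u') qb
                   \<longrightarrow> fmor_eq W u u')))"

definition orbital :: "('o, 'm) cat \<Rightarrow> bool" where
  "orbital T \<longleftrightarrow>
     (\<forall>xs ys zs a b. fobj T xs \<and> fobj T ys \<and> fobj T zs \<and> fmor T xs zs a \<and> fmor T ys zs b \<longrightarrow>
        (\<exists>P pa pb. is_pullback T xs ys zs a b P pa pb))"

text \<open>An object of F_V = F_T/V is a list of pairs (U_i, f_i) with f_i : U_i \<rightarrow> V; the pairs
  are exactly its orbits.\<close>

definition sobj :: "('o, 'm) cat \<Rightarrow> 'o \<Rightarrow> ('o \<times> 'm) list \<Rightarrow> bool" where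
  "sobj T V S \<longleftrightarrow> (\<forall>p\<in>set S. fst p \<in> Obj T \<and> snd p \<in> Hom T (fst p) V)"

definition smor :: "('o, 'm) cat \<Rightarrow> ('o \<times> 'm) list \<Rightarrow> ('o \<times> 'm) list \<Rightarrow> (nat \<Rightarrow> nat \<times> 'm) \<Rightarrow> bool" where
  "smor T S S' g \<longleftrightarrow> fmor T (map fst S) (map fst S') g \<and>
     (\<forall>i<length S. Comp T (snd (S' ! fst (g i))) (snd (g i)) = snd (S ! i))"

definition siso :: "('o, 'm) cat \<Rightarrow> ('o \<times> 'm) list \<Rightarrow> ('o \<times> 'm) list \<Rightarrow> bool" where
  "siso T S S' \<longleftrightarrow> (\<exists>g h. smor T S S' g \<and> smor T S' S h \<and>
       fmor_eq (map fst S) (fcomp T h g) (fid T (map fst S)) \<and>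
       fmor_eq (map fst S') (fcomp T g h) (fid T (map fst S')))"

definition term_obj :: "('o, 'm) cat \<Rightarrow> 'o \<Rightarrow> ('o \<times> 'm) list" where
  "term_obj T V = [(V, Ident T V)]"

text \<open>R (in F_U) is a restriction Res^V_U S along f : U \<rightarrow> V, i.e. a pullback of
  S \<rightarrow> V \<leftarrow> U in F_T, regarded over U via its projection.\<close>
definition is_res :: "('o, 'm) cat \<Rightarrow> 'm \<Rightarrow> ('o \<times> 'm) list \<Rightarrow> ('o \<times> 'm) list \<Rightarrow> 'o \<Rightarrow> 'o \<Rightarrow> bool" where
  "is_res T f S R U V \<longleftrightarrow>
     (\<exists>pa pb. is_pullback T (map fst S) [U] [V] (\<lambda>i. (0, snd (S ! i))) (\<lambda>i. (0, f))
                 (map fst R) pa pb \<and>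
              (\<forall>k<length R. snd (R ! k) = snd (pb k)))"

text \<open>Induction along the structure maps: the coproduct over the orbits (U_i,f_i) of S of
  Ind^V_{U_i} (Ts i).\<close>
definition ind_coprod :: "('o, 'm) cat \<Rightarrow> ('o \<times> 'm) list \<Rightarrow> (nat \<Rightarrow> ('o \<times> 'm) list) \<Rightarrow> ('o \<times> 'm) list" where
  "ind_coprod T S Ts =
     concat (map (\<lambda>i. map (\<lambda>p. (fst p, Comp T (snd (S ! i)) (snd p))) (Ts i)) [0..<length S])"

definition full_Tsubcat :: "('o, 'm) cat \<Rightarrow> ('o \<Rightarrow> ('o \<times> 'm) list set) \<Rightarrow> bool" where
  "full_Tsubcat T C \<longleftrightarrow>
     (\<forall>V. V \<notin> Obj T \<longrightarrow> C V = {}) \<and>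
     (\<forall>V\<in>Obj T. \<forall>S\<in>C V. sobj T V S) \<and>
     (\<forall>V\<in>Obj T. \<forall>S\<in>C V. \<forall>S'. sobj T V S' \<and> siso T S S' \<longrightarrow> S' \<in> C V) \<and>
     (\<forall>U\<in>Obj T. \<forall>V\<in>Obj T. \<forall>f\<in>Hom T U V. \<forall>S\<in>C V. \<forall>R.
         sobj T U R \<and> is_res T f S R U V \<longrightarrow> R \<in> C U)"

definition wIndSys :: "('o, 'm) cat \<Rightarrow> ('o \<Rightarrow> ('o \<times> 'm) list set) \<Rightarrow> bool" where
  "wIndSys T C \<longleftrightarrow> full_Tsubcat T C \<and>
     (\<forall>V\<in>Obj T. C V \<noteq> {} \<longrightarrow> term_obj T V \<in> C V) \<and>
     (\<forall>V\<in>Obj T. \<forall>S\<in>C V. \<forall>Ts. (\<forall>i<length S. Ts i \<in> C (fst (S ! i))) \<longrightarrow>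
         ind_coprod T S Ts \<in> C V)"

definition one_color :: "('o, 'm) cat \<Rightarrow> ('o \<Rightarrow> ('o \<times> 'm) list set) \<Rightarrow> bool" where
  "one_color T C \<longleftrightarrow> (\<forall>V\<in>Obj T. C V \<noteq> {})"

definition colors :: "('o, 'm) cat \<Rightarrow> ('o \<Rightarrow> ('o \<times> 'm) list set) \<Rightarrow> 'o set" where
  "colors T C = {V \<in> Obj T. term_obj T V \<in> C V}"

definition is_family :: "('o, 'm) cat \<Rightarrow> 'o set \<Rightarrow> bool" where
  "is_family T F \<longleftrightarrow> F \<subseteq> Obj T \<and>
     (\<forall>V\<in>Obj T. \<forall>W\<in>F. Hom T V W \<noteq> {} \<longrightarrow> V \<in> F)"

definition subcat :: "('o, 'm) cat \<Rightarrow> 'o set \<Rightarrow> ('o, 'm) cat" where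
  "subcat T F = T\<lparr>Obj := F\<rparr>"

definition extE :: "'o set \<Rightarrow> ('o \<Rightarrow> ('o \<times> 'm) list set) \<Rightarrow> ('o \<Rightarrow> ('o \<times> 'm) list set)" where
  "extE F C = (\<lambda>V. if V \<in> F then C V else {})"

end

theory Submission
  imports Defs
begin

lemma sub_Obj[simp]: "Obj (subcat T F) = F" by (simp add: subcat_def)
lemma sub_Hom[simp]: "Hom (subcat T F) = Hom T" by (simp add: subcat_def)
lemma sub_Comp[simp]: "Comp (subcat T F) = Comp T" by (simp add: subcat_def)
lemma sub_Ident[simp]: "Ident (subcat T F) = Ident T" by (simp add: subcat_def)

lemma sub_fmor[simp]: "fmor (subcat T F) = fmor T"
  by (intro ext) (simp add: fmor_def)
lemma sub_fcomp[simp]: "fcomp (subcat T F) = fcomp T"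
  by (intro ext) (simp add: fcomp_def)
lemma sub_fid[simp]: "fid (subcat T F) = fid T"
  by (intro ext) (simp add: fid_def)
lemma sub_smor[simp]: "smor (subcat T F) = smor T"
  by (intro ext) (simp add: smor_def)
lemma sub_siso[simp]: "siso (subcat T F) = siso T"
  by (intro ext) (simp add: siso_def)
lemma sub_term[simp]: "term_obj (subcat T F) = term_obj T"
  by (intro ext) (simp add: term_obj_def)
lemma sub_ind[simp]: "ind_coprod (subcat T F) = ind_coprod T"
  by (intro ext) (simp add: ind_coprod_def)
lemma sub_fobj[simp]: "fobj (subcat T F) xs \<longleftrightarrow> set xs \<subseteq> F"
  by (simp add: fobj_def)

lemma fam_in:
  assumes "is_family T F" "W \<in> F" "V \<in> Obj T" "Hom T V W \<noteq> {}"
  shows "V \<in> F"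
  using assms unfolding is_family_def by blast

lemma sobj_sub:
  assumes "is_family T F" "V \<in> F"
  shows "sobj (subcat T F) V S \<longleftrightarrow> sobj T V S"
proof -
  have "fst p \<in> F" if "fst p \<in> Obj T" "snd p \<in> Hom T (fst p) V" for p
    using fam_in[OF assms(1,2) that(1)] that(2) by blast
  moreover have "F \<subseteq> Obj T" using assms(1) unfolding is_family_def by blast
  ultimately show ?thesis unfolding sobj_def by auto
qed

lemma fmor_U:
  assumes "is_family T F" "U \<in> F" "fobj T W" "fmor T W [U] q"
  shows "set W \<subseteq> F"
proof
  fix x assume "x \<in> set W"
  then obtain i where i: "i < length W" "W ! i = x" by (auto simp: in_set_conv_nth)
  have "snd (q i) \<in> Hom T x U" using assms(4) i unfolding fmor_def by auto
  moreover have "x \<in> Obj T" using assms(3) i unfolding fobj_def by auto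
  ultimately show "x \<in> F" using fam_in[OF assms(1,2)] by blast
qed

lemma res_sub:
  assumes "is_family T F" "U \<in> F" "set (map fst R) \<subseteq> F"
  shows "is_res (subcat T F) f S R U V \<longleftrightarrow> is_res T f S R U V"
proof
  assume "is_res (subcat T F) f S R U V"
  then obtain pa pb where pb: "is_pullback (subcat T F) (map fst S) [U] [V] (\<lambda>i. (0, snd (S ! i))) (\<lambda>i. (0, f))
                 (map fst R) pa pb" and r: "\<forall>k<length R. snd (R ! k) = snd (pb k)"
    unfolding is_res_def by blast
  have F: "F \<subseteq> Obj T" using assms(1) unfolding is_family_def by blast
  have "is_pullback T (map fst S) [U] [V] (\<lambda>i. (0, snd (S ! i))) (\<lambda>i. (0, f))
                 (map fst R) pa pb"
    unfolding is_pullback_def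
  proof (intro conjI allI impI)
    show "fobj T (map fst R)" using assms(3) F unfolding fobj_def by blast
  next
    fix W qa qb
    assume h: "fobj T W \<and> fmor T W (map fst S) qa \<and> fmor T W [U] qb \<and>
       fmor_eq W (fcomp T (\<lambda>i. (0, snd (S ! i))) qa) (fcomp T (\<lambda>i. (0, f)) qb)"
    then have "set W \<subseteq> F" using fmor_U[OF assms(1,2)] by blast
    then show "\<exists>u. fmor T W (map fst R) u \<and>
              fmor_eq W (fcomp T pa u) qa \<and> fmor_eq W (fcomp T pb u) qb \<and>
              (\<forall>u'. fmor T W (map fst R) u' \<and> fmor_eq W (fcomp T pa u') qa \<and> fmor_eq W (fcomp T pb u') qb \<longrightarrow>
                    fmor_eq W u u')"
      using pb h unfolding is_pullback_def by simp
  qed (use pb in \<open>simp_all add: is_pullback_def\<close>)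
  then show "is_res T f S R U V" using r unfolding is_res_def by blast
next
  assume "is_res T f S R U V"
  then obtain pa pb where pb: "is_pullback T (map fst S) [U] [V] (\<lambda>i. (0, snd (S ! i))) (\<lambda>i. (0, f))
                 (map fst R) pa pb" and r: "\<forall>k<length R. snd (R ! k) = snd (pb k)"
    unfolding is_res_def by blast
  have F: "F \<subseteq> Obj T" using assms(1) unfolding is_family_def by blast
  have "is_pullback (subcat T F) (map fst S) [U] [V] (\<lambda>i. (0, snd (S ! i))) (\<lambda>i. (0, f))
                 (map fst R) pa pb"
    using pb assms(3) F unfolding is_pullback_def fobj_def by auto
  then show "is_res (subcat T F) f S R U V" using r unfolding is_res_def by blast
qed

lemma fT1: assumes "full_Tsubcat T C" "V \<notin> Obj T" shows "C V = {}"
  using assms(1)[unfolded full_Tsubcat_def, THEN conjunct1, rule_format] assms(2) .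
lemma fT2: assumes "full_Tsubcat T C" "V \<in> Obj T" "S \<in> C V" shows "sobj T V S"
  using assms(1)[unfolded full_Tsubcat_def, THEN conjunct2, THEN conjunct1, rule_format] assms(2,3) .
lemma fT3: assumes "full_Tsubcat T C" "V \<in> Obj T" "S \<in> C V" "sobj T V S'" "siso T S S'" shows "S' \<in> C V"
  using assms(1)[unfolded full_Tsubcat_def, THEN conjunct2, THEN conjunct2, THEN conjunct1, rule_format, OF assms(2,3) conjI[OF assms(4,5)]] .
lemma fT4: assumes "full_Tsubcat T C" "U \<in> Obj T" "V \<in> Obj T" "f \<in> Hom T U V" "S \<in> C V" "sobj T U R"
       "is_res T f S R U V" shows "R \<in> C U"
  using assms(1)[unfolded full_Tsubcat_def, THEN conjunct2, THEN conjunct2, THEN conjunct2, rule_format, OF assms(2-5) conjI[OF assms(6,7)]] .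
lemmas fT = fT1 fT2 fT3 fT4

lemma wI1: assumes "wIndSys T C" shows "full_Tsubcat T C"
  using assms[unfolded wIndSys_def, THEN conjunct1] .
lemma wI2: assumes "wIndSys T C" "V \<in> Obj T" "C V \<noteq> {}" shows "term_obj T V \<in> C V"
  using assms(1)[unfolded wIndSys_def, THEN conjunct2, THEN conjunct1, rule_format] assms(2,3) .
lemma wI3: assumes "wIndSys T C" "V \<in> Obj T" "S \<in> C V" "\<forall>i<length S. Ts i \<in> C (fst (S ! i))"
  shows "ind_coprod T S Ts \<in> C V"
  using assms(1)[unfolded wIndSys_def, THEN conjunct2, THEN conjunct2, rule_format, OF assms(2,3)] assms(4) by blast
lemmas wI = wI1 wI2 wI3

lemma wIntro:
  assumes "\<And>V. V \<notin> Obj T \<Longrightarrow> C V = {}"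
    "\<And>V S. V \<in> Obj T \<Longrightarrow> S \<in> C V \<Longrightarrow> sobj T V S"
    "\<And>V S S'. V \<in> Obj T \<Longrightarrow> S \<in> C V \<Longrightarrow> sobj T V S' \<Longrightarrow> siso T S S' \<Longrightarrow> S' \<in> C V"
    "\<And>U V f S R. U \<in> Obj T \<Longrightarrow> V \<in> Obj T \<Longrightarrow> f \<in> Hom T U V \<Longrightarrow> S \<in> C V \<Longrightarrow> sobj T U R
       \<Longrightarrow> is_res T f S R U V \<Longrightarrow> R \<in> C U"
    "\<And>V. V \<in> Obj T \<Longrightarrow> C V \<noteq> {} \<Longrightarrow> term_obj T V \<in> C V"
    "\<And>V S Ts. V \<in> Obj T \<Longrightarrow> S \<in> C V \<Longrightarrow> (\<forall>i<length S. Ts i \<in> C (fst (S ! i))) \<Longrightarrow> ind_coprod T S Ts \<in> C V"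
  shows "wIndSys T C"
  unfolding wIndSys_def full_Tsubcat_def
  apply (intro conjI allI ballI impI)
  apply (erule assms(1))
  apply (erule (1) assms(2))
  apply (erule conjE, erule (3) assms(3))
  apply (erule conjE, erule (5) assms(4))
  apply (erule (1) assms(5))
  apply (erule (2) assms(6))
  done

theorem mainTheorem8:
  fixes T :: "('o, 'm) cat" and F :: "'o set"
  assumes "is_category T" and "orbital T" and "is_family T F"
  shows "{C. wIndSys T C \<and> colors T C = F} =
         extE F ` {C. wIndSys (subcat T F) C \<and> one_color (subcat T F) C}"
proof -
  note fam = assms(3)
  have F: "F \<subseteq> Obj T" using fam unfolding is_family_def by blast
  have sobjF: "set (map fst R) \<subseteq> F" if "sobj T U R" "U \<in> F" for U R
  proof
    fix x assume "x \<in> set (map fst R)"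
    then obtain p where p: "p \<in> set R" "x = fst p" by auto
    then have "fst p \<in> Obj T" "snd p \<in> Hom T (fst p) U" using that(1) unfolding sobj_def by auto
    then show "x \<in> F" using fam_in[OF fam \<open>U \<in> F\<close>] p by blast
  qed
  show ?thesis
  proof (intro equalityI subsetI)
    fix C assume "C \<in> {C. wIndSys T C \<and> colors T C = F}"
    then have w: "wIndSys T C" and c: "colors T C = F" by auto
    note wf = fT[OF wI(1)[OF w]]
    have off: "C V = {}" if "V \<notin> F" for V
    proof (cases "V \<in> Obj T")
      case True
      have "term_obj T V \<notin> C V" using c that True unfolding colors_def by blast
      then show ?thesis using wI(2)[OF w True] by blast
    next
      case False
      then show ?thesis using wf(1) by blast
    qed
    have e: "extE F C = C" unfolding extE_def using off by (intro ext) auto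
    have "wIndSys (subcat T F) C"
    proof (rule wIntro)
      fix V assume "V \<notin> Obj (subcat T F)" then show "C V = {}" using off by simp
    next
      fix V S assume a: "V \<in> Obj (subcat T F)" "S \<in> C V"
      then have "V \<in> F" by simp
      then show "sobj (subcat T F) V S"
        using wf(2)[of V S] F a sobj_sub[OF fam \<open>V \<in> F\<close>] by blast
    next
      fix V S S' assume a: "V \<in> Obj (subcat T F)" "S \<in> C V" "sobj (subcat T F) V S'" "siso (subcat T F) S S'"
      then have "V \<in> F" by simp
      then show "S' \<in> C V"
        using wf(3)[of V S S'] F a sobj_sub[OF fam \<open>V \<in> F\<close>] by auto
    next
      fix U V f S R
      assume a: "U \<in> Obj (subcat T F)" "V \<in> Obj (subcat T F)" "f \<in> Hom (subcat T F) U V" "S \<in> C V"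
        "sobj (subcat T F) U R" "is_res (subcat T F) f S R U V"
      then have U: "U \<in> F" and V: "V \<in> F" by simp_all
      have r: "sobj T U R" using a(5) sobj_sub[OF fam U] by blast
      moreover have "is_res T f S R U V" using a(6) res_sub[OF fam U sobjF[OF r U]] by blast
      ultimately show "R \<in> C U" using wf(4)[of U V f S R] a U V F by auto
    next
      fix V assume "V \<in> Obj (subcat T F)" "C V \<noteq> {}"
      then show "term_obj (subcat T F) V \<in> C V" using wI(2)[OF w, of V] F by auto
    next
      fix V S Ts assume "V \<in> Obj (subcat T F)" "S \<in> C V" "\<forall>i<length S. Ts i \<in> C (fst (S ! i))"
      then show "ind_coprod (subcat T F) S Ts \<in> C V" using wI(3)[OF w, of V S Ts] F by auto
    qed
    moreover have "one_color (subcat T F) C"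
      using c unfolding one_color_def colors_def by auto
    ultimately show "C \<in> extE F ` {C. wIndSys (subcat T F) C \<and> one_color (subcat T F) C}"
      using e by (metis (mono_tags, lifting) image_eqI mem_Collect_eq)
  next
    fix C assume "C \<in> extE F ` {C. wIndSys (subcat T F) C \<and> one_color (subcat T F) C}"
    then obtain D where C: "C = extE F D" and w: "wIndSys (subcat T F) D"
      and oc: "one_color (subcat T F) D" by auto
    note wf = fT[OF wI(1)[OF w]]
    have mem: "S \<in> C V \<longleftrightarrow> V \<in> F \<and> S \<in> D V" for S V
      using C unfolding extE_def by auto
    have "wIndSys T C"
    proof (rule wIntro)
      fix V assume "V \<notin> Obj T" then show "C V = {}" using F mem by auto
    next
      fix V S assume a: "V \<in> Obj T" "S \<in> C V"
      then have V: "V \<in> F" "S \<in> D V" using mem by auto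
      then show "sobj T V S"
        using wf(2)[of V S] sobj_sub[OF fam V(1)] by simp
    next
      fix V S S' assume a: "V \<in> Obj T" "S \<in> C V" "sobj T V S'" "siso T S S'"
      then have V: "V \<in> F" "S \<in> D V" using mem by auto
      then have "S' \<in> D V"
        using wf(3)[of V S S'] sobj_sub[OF fam V(1)] a by simp
      then show "S' \<in> C V" using V mem by blast
    next
      fix U V f S R
      assume a: "U \<in> Obj T" "V \<in> Obj T" "f \<in> Hom T U V" "S \<in> C V"
        "sobj T U R" "is_res T f S R U V"
      then have V: "V \<in> F" "S \<in> D V" using mem by auto
      then have U: "U \<in> F" using fam_in[OF fam V(1) a(1)] a(3) by blast
      have "sobj (subcat T F) U R" using a sobj_sub[OF fam U] by auto
      moreover have "is_res (subcat T F) f S R U V"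
        using a(6) res_sub[OF fam U sobjF[OF a(5) U]] by blast
      ultimately have "R \<in> D U" using wf(4)[of U V f S R] a U V by simp
      then show "R \<in> C U" using U mem by blast
    next
      fix V assume a: "V \<in> Obj T" "C V \<noteq> {}"
      then have V: "V \<in> F" "D V \<noteq> {}" using mem by auto
      then have "term_obj T V \<in> D V" using wI(2)[OF w, of V] by simp
      then show "term_obj T V \<in> C V" using V mem by blast
    next
      fix V S Ts assume a: "V \<in> Obj T" "S \<in> C V" "\<forall>i<length S. Ts i \<in> C (fst (S ! i))"
      then have V: "V \<in> F" "S \<in> D V" using mem by auto
      have "\<forall>i<length S. Ts i \<in> D (fst (S ! i))" using a(3) mem by blast
      then have "ind_coprod T S Ts \<in> D V" using wI(3)[OF w, of V S Ts] V by simp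
      then show "ind_coprod T S Ts \<in> C V" using V mem by blast
    qed
    moreover have "colors T C = F"
    proof -
      have "term_obj T V \<in> D V" if "V \<in> F" for V
        using that oc wI(2)[OF w, of V] unfolding one_color_def by simp
      then show ?thesis using F mem unfolding colors_def by auto
    qed
    ultimately show "C \<in> {C. wIndSys T C \<and> colors T C = F}" by blast
  qed
qed

end
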